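(* Let $\Omega\subset\mathbb{C}^n$ be a bounded connected domain and let $B(\Omega)$ be a Banach space of holomorphic functions on $\Omega$ containing all polynomials on $\Omega$, such that for every $z\in\Omega$ the evaluation functional $K_z(f)=f(z)$ is bounded on $B(\Omega)$, and such that the polynomials are dense in $B(\Omega)$. Let $\{z_k\}\subset\Omega$ and $\zeta\in\partial\Omega$ with $z_k\to\zeta$ and $\|K_{z_k}\|\to\infty$. Then $$k_{z_k}=\frac{K_{z_k}}{\|K_{z_k}\|}\to 0\quad\text{weak}^*\text{ in }(B(\Omega))^*\text{ as }k\to\infty.$$
   Context: A Banach space of holomorphic functions on $\Omega$ is a vector space of holomorphic functions on $\Omega$ (pointwise operations) with a complete norm. $\|K_z\|$ is the norm in the dual space $(B(\Omega))^*$. *)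

theory Defs
  imports "HOL-Analysis.Analysis"
begin

definition holomorphic_on_n :: "(complex^'n \<Rightarrow> complex) \<Rightarrow> (complex^'n) set \<Rightarrow> bool" where
  "holomorphic_on_n f S \<longleftrightarrow>
     (\<forall>z\<in>S. \<exists>L. (f has_derivative L) (at z) \<and> (\<forall>c w. L (c *s w) = c * L w))"

inductive_set poly_fun_n :: "(complex^'n \<Rightarrow> complex) set" where
  const: "(\<lambda>z. c) \<in> poly_fun_n"
| coord: "(\<lambda>z. z $ i) \<in> poly_fun_n"
| add: "p \<in> poly_fun_n \<Longrightarrow> q \<in> poly_fun_n \<Longrightarrow> (\<lambda>z. p z + q z) \<in> poly_fun_n"
| mult: "p \<in> poly_fun_n \<Longrightarrow> q \<in> poly_fun_n \<Longrightarrow> (\<lambda>z. p z * q z) \<in> poly_fun_n"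

text \<open>Functions on \<Omega> are represented by functions on C^n vanishing outside \<Omega>.\<close>
definition restr :: "(complex^'n) set \<Rightarrow> (complex^'n \<Rightarrow> complex) \<Rightarrow> (complex^'n \<Rightarrow> complex)" where
  "restr \<Omega> f = (\<lambda>z. if z \<in> \<Omega> then f z else 0)"

definition banach_hol_space ::
  "(complex^'n) set \<Rightarrow> (complex^'n \<Rightarrow> complex) set \<Rightarrow> ((complex^'n \<Rightarrow> complex) \<Rightarrow> real) \<Rightarrow> bool" where
  "banach_hol_space \<Omega> V N \<longleftrightarrow>
     (\<forall>f\<in>V. holomorphic_on_n f \<Omega> \<and> (\<forall>z. z \<notin> \<Omega> \<longrightarrow> f z = 0)) \<and>
     (\<lambda>z. 0) \<in> V \<and>
     (\<forall>f\<in>V. \<forall>g\<in>V. (\<lambda>z. f z + g z) \<in> V) \<and>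
     (\<forall>f\<in>V. \<forall>c. (\<lambda>z. c * f z) \<in> V) \<and>
     (\<forall>f\<in>V. N f \<ge> 0 \<and> (N f = 0 \<longleftrightarrow> f = (\<lambda>z. 0))) \<and>
     (\<forall>f\<in>V. \<forall>c. N (\<lambda>z. c * f z) = cmod c * N f) \<and>
     (\<forall>f\<in>V. \<forall>g\<in>V. N (\<lambda>z. f z + g z) \<le> N f + N g) \<and>
     (\<forall>F. (\<forall>k. F k \<in> V) \<longrightarrow>
          (\<forall>e>0. \<exists>M. \<forall>m\<ge>M. \<forall>n\<ge>M. N (\<lambda>z. F m z - F n z) < e) \<longrightarrow>
          (\<exists>f\<in>V. (\<lambda>k. N (\<lambda>z. F k z - f z)) \<longlonglongrightarrow> 0))"

definition eval_norm ::
  "(complex^'n \<Rightarrow> complex) set \<Rightarrow> ((complex^'n \<Rightarrow> complex) \<Rightarrow> real) \<Rightarrow> complex^'n \<Rightarrow> real" where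
  "eval_norm V N z = (SUP f \<in> {f \<in> V. N f \<le> 1}. cmod (f z))"

end

theory Submission
  imports Defs
begin

lemma bhs_nsm: "banach_hol_space \<Omega> V N \<Longrightarrow> f\<in>V \<Longrightarrow> N (\<lambda>z. c * f z) = cmod c * N f"
  unfolding banach_hol_space_def by (elim conjE) (drule bspec, assumption, erule spec)
lemma bhs_sm: "banach_hol_space \<Omega> V N \<Longrightarrow> f\<in>V \<Longrightarrow> (\<lambda>z. c * f z) \<in> V"
  unfolding banach_hol_space_def by (elim conjE) (drule bspec, assumption, erule spec)
lemma bhs_add: "banach_hol_space \<Omega> V N \<Longrightarrow> f\<in>V \<Longrightarrow> g\<in>V \<Longrightarrow> (\<lambda>z. f z + g z) \<in> V"
  unfolding banach_hol_space_def by (elim conjE) (drule bspec, assumption, drule bspec, assumption, assumption)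
lemma bhs_N: "banach_hol_space \<Omega> V N \<Longrightarrow> f\<in>V \<Longrightarrow> 0 \<le> N f \<and> (N f = 0 \<longleftrightarrow> f = (\<lambda>z. 0))"
  unfolding banach_hol_space_def by (elim conjE) (drule bspec, assumption, assumption)

lemma poly_cont: "p \<in> poly_fun_n \<Longrightarrow> continuous_on UNIV p"
  by (induction rule: poly_fun_n.induct) (auto intro!: continuous_intros)

lemma eval_le:
  assumes B: "banach_hol_space \<Omega> V N"
    and eb: "\<forall>w\<in>\<Omega>. \<exists>C. \<forall>f\<in>V. cmod (f w) \<le> C * N f"
    and g: "g \<in> V" and w: "w \<in> \<Omega>"
  shows "cmod (g w) \<le> eval_norm V N w * N g"
proof -
  from eb w obtain C where C: "\<forall>f\<in>V. cmod (f w) \<le> C * N f" by blast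
  have bdd: "bdd_above ((\<lambda>f. cmod (f w)) ` {f \<in> V. N f \<le> 1})"
  proof (rule bdd_aboveI2)
    fix f assume f: "f \<in> {f \<in> V. N f \<le> 1}"
    then have "cmod (f w) \<le> C * N f" using C by auto
    also have "\<dots> \<le> max C 0"
      using f bhs_N[OF B, of f]
      by (cases "C \<ge> 0") (auto intro: mult_left_le mult_nonpos_nonneg order_trans)
    finally show "cmod (f w) \<le> max C 0" .
  qed
  show ?thesis
  proof (cases "N g = 0")
    case True
    then have "g = (\<lambda>z. 0)" using bhs_N[OF B g] by simp
    then show ?thesis using True by simp
  next
    case False
    have Ng: "N g > 0" using False bhs_N[OF B g] by linarith
    define h where "h = (\<lambda>z. complex_of_real (1 / N g) * g z)"
    have hV: "h \<in> V" unfolding h_def by (rule bhs_sm[OF B g])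
    have "N h = cmod (complex_of_real (1 / N g)) * N g"
      unfolding h_def by (rule bhs_nsm[OF B g])
    also have "\<dots> = 1" using Ng by (simp add: norm_divide)
    finally have "N h = 1" .
    with hV have "cmod (h w) \<le> eval_norm V N w"
      unfolding eval_norm_def by (intro cSUP_upper[OF _ bdd]) auto
    moreover have "cmod (h w) = cmod (g w) / N g"
      using Ng unfolding h_def by (simp add: norm_divide)
    ultimately show ?thesis using Ng by (simp add: divide_le_eq)
  qed
qed

theorem proposition2p8:
  fixes \<Omega> :: "(complex^'n) set" and V :: "(complex^'n \<Rightarrow> complex) set"
    and N :: "(complex^'n \<Rightarrow> complex) \<Rightarrow> real"
    and z :: "nat \<Rightarrow> complex^'n" and \<zeta> :: "complex^'n"
  assumes "open \<Omega>" and "connected \<Omega>" and "bounded \<Omega>" and "\<Omega> \<noteq> {}"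
    and "banach_hol_space \<Omega> V N"
    and polys_in: "\<forall>p\<in>poly_fun_n. restr \<Omega> p \<in> V"
    and eval_bdd: "\<forall>w\<in>\<Omega>. \<exists>C. \<forall>f\<in>V. cmod (f w) \<le> C * N f"
    and dense: "\<forall>f\<in>V. \<forall>e>0. \<exists>p\<in>poly_fun_n. N (\<lambda>w. f w - restr \<Omega> p w) < e"
    and "\<forall>k. z k \<in> \<Omega>" and "\<zeta> \<in> frontier \<Omega>" and "z \<longlonglongrightarrow> \<zeta>"
    and "filterlim (\<lambda>k. eval_norm V N (z k)) at_top sequentially"
  shows "\<forall>f\<in>V. (\<lambda>k. f (z k) / complex_of_real (eval_norm V N (z k))) \<longlonglongrightarrow> 0"
proof
  fix f assume fV: "f \<in> V"
  define ev where "ev = (\<lambda>k. eval_norm V N (z k))"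
  have evlim: "filterlim ev at_top sequentially" using assms(12) unfolding ev_def .
  have evpos: "eventually (\<lambda>k. ev k > 0) sequentially"
    using evlim by (simp add: filterlim_at_top_dense)
  have B: "banach_hol_space \<Omega> V N" by fact
  show "(\<lambda>k. f (z k) / complex_of_real (eval_norm V N (z k))) \<longlonglongrightarrow> 0"
    unfolding tendsto_iff
  proof (intro allI impI)
    fix r :: real assume r: "r > 0"
    from dense fV r obtain p where p: "p \<in> poly_fun_n"
      and pN: "N (\<lambda>w. f w - restr \<Omega> p w) < r/2" by (meson half_gt_zero)
    define g where "g = (\<lambda>w. f w - restr \<Omega> p w)"
    have rp: "restr \<Omega> p \<in> V" using polys_in p by blast
    have m1: "(\<lambda>w. (-1) * restr \<Omega> p w) \<in> V" by (rule bhs_sm[OF B rp])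
    have "(\<lambda>w. f w + (\<lambda>w. (-1) * restr \<Omega> p w) w) \<in> V"
      by (rule bhs_add[OF B fV m1])
    moreover have "(\<lambda>w. f w + (\<lambda>w. (-1) * restr \<Omega> p w) w) = g"
      unfolding g_def by simp
    ultimately have gV: "g \<in> V" by simp
    have "((\<lambda>k. p (z k)) \<longlongrightarrow> p \<zeta>) sequentially"
    proof -
      have "isCont p \<zeta>" using poly_cont[OF p] by (simp add: continuous_on_eq_continuous_at)
      then show ?thesis by (rule isCont_tendsto_compose[OF _ assms(11)])
    qed
    moreover have "((\<lambda>k. inverse (ev k)) \<longlongrightarrow> 0) sequentially"
      using evlim by (rule tendsto_inverse_0_at_top)
    ultimately have "((\<lambda>k. p (z k) * complex_of_real (inverse (ev k))) \<longlongrightarrow> p \<zeta> * complex_of_real 0) sequentially"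
      by (intro tendsto_intros)
    then have "((\<lambda>k. p (z k) / complex_of_real (ev k)) \<longlongrightarrow> 0) sequentially"
      by (simp add: divide_inverse)
    moreover have r2: "r/2 > 0" using r by simp
    ultimately have ev2: "eventually (\<lambda>k. dist (p (z k) / complex_of_real (ev k)) 0 < r/2) sequentially"
      by (rule tendstoD)
    show "eventually (\<lambda>k. dist (f (z k) / complex_of_real (eval_norm V N (z k))) 0 < r) sequentially"
      using ev2 evpos
    proof eventually_elim
      case (elim k)
      have zk: "z k \<in> \<Omega>" using assms(9) by auto
      have fz: "f (z k) = g (z k) + p (z k)" using zk unfolding g_def restr_def by simp
      have "cmod (g (z k)) \<le> ev k * N g"
        unfolding ev_def by (rule eval_le[OF B eval_bdd gV zk])
      then have "cmod (g (z k)) / ev k \<le> N g" using elim(2) by (simp add: divide_le_eq mult.commute)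
      then have h1: "cmod (g (z k) / complex_of_real (ev k)) < r/2"
      proof -
        have "cmod (g (z k) / complex_of_real (ev k)) = cmod (g (z k)) / ev k"
          using elim(2) by (simp add: norm_divide)
        moreover have "N g < r/2" using pN unfolding g_def .
        ultimately show ?thesis using \<open>cmod (g (z k)) / ev k \<le> N g\<close> by linarith
      qed
      have "dist (f (z k) / complex_of_real (ev k)) 0
          = cmod (g (z k) / complex_of_real (ev k) + p (z k) / complex_of_real (ev k))"
        by (simp add: fz add_divide_distrib)
      also have "\<dots> \<le> cmod (g (z k) / complex_of_real (ev k)) + cmod (p (z k) / complex_of_real (ev k))"
        by (rule norm_triangle_ineq)
      also have "\<dots> < r" using h1 elim(1) by (simp add: dist_norm)
      finally show ?case by (simp add: ev_def)
    qed
  qed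
qed

end
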